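(* Let $K$ be a field and $P$ an arbitrary poset. The quotient algebra $FI(P)/\mathrm{Rad}\,FI(P)$ is commutative, where $\mathrm{Rad}$ denotes the Jacobson radical.
   Context: $K$ is a field, $P$ an arbitrary poset. $I(P)$ is the set of functions $\alpha$ assigning to each pair $x\le y$ in $P$ a value $\alpha(x,y)\in K$. An element $\alpha\in I(P)$ is a finitary series if for all $x<y$ in $P$ there are only finitely many pairs $(u,v)$ with $x\le u<v\le y$ and $\alpha(u,v)\neq0$; $FI(P)$ is the set of finitary series. $FI(P)$ is an associative $K$-algebra under pointwise addition and convolution $(\alpha\beta)(x,y)=\sum_{x\le z\le y}\alpha(x,z)\beta(z,y)$. *)

theory Defs
  imports "HOL-Algebra.QuotRing"
begin

text \<open>Incidence-algebra elements: functions on pairs, normalised to vanish off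
  the relation x \<le> y. The poset is the carrier set P of a type with class order.\<close>

definition incidence :: "'a::order set \<Rightarrow> ('a \<Rightarrow> 'a \<Rightarrow> 'k::field) set" where
  "incidence P = {\<alpha>. \<forall>x y. \<alpha> x y \<noteq> 0 \<longrightarrow> x \<in> P \<and> y \<in> P \<and> x \<le> y}"

definition finitary :: "'a::order set \<Rightarrow> ('a \<Rightarrow> 'a \<Rightarrow> 'k::field) \<Rightarrow> bool" where
  "finitary P \<alpha> \<longleftrightarrow> (\<forall>x\<in>P. \<forall>y\<in>P. x < y \<longrightarrow>
      finite {(u, v). u \<in> P \<and> v \<in> P \<and> x \<le> u \<and> u < v \<and> v \<le> y \<and> \<alpha> u v \<noteq> 0})"

definition FI :: "'a::order set \<Rightarrow> ('a \<Rightarrow> 'a \<Rightarrow> 'k::field) set" where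
  "FI P = {\<alpha> \<in> incidence P. finitary P \<alpha>}"

text \<open>Convolution; for finitary series the index set of nonzero terms is finite.\<close>
definition conv :: "'a::order set \<Rightarrow> ('a \<Rightarrow> 'a \<Rightarrow> 'k::field) \<Rightarrow> ('a \<Rightarrow> 'a \<Rightarrow> 'k) \<Rightarrow> ('a \<Rightarrow> 'a \<Rightarrow> 'k)" where
  "conv P \<alpha> \<beta> = (\<lambda>x y. if x \<in> P \<and> y \<in> P \<and> x \<le> y then
      (\<Sum>z \<in> {z \<in> P. x \<le> z \<and> z \<le> y \<and> \<alpha> x z * \<beta> z y \<noteq> 0}. \<alpha> x z * \<beta> z y) else 0)"

definition delta :: "'a::order set \<Rightarrow> ('a \<Rightarrow> 'a \<Rightarrow> 'k::field)" where
  "delta P = (\<lambda>x y. if x \<in> P \<and> x = y then 1 else 0)"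

definition FI_ring :: "'a::order set \<Rightarrow> ('a \<Rightarrow> 'a \<Rightarrow> 'k::field) ring" where
  "FI_ring P = \<lparr>carrier = FI P, mult = conv P, one = delta P,
                zero = (\<lambda>x y. 0), add = (\<lambda>\<alpha> \<beta> x y. \<alpha> x y + \<beta> x y)\<rparr>"

definition left_ideal :: "'b set \<Rightarrow> ('b, 'c) ring_scheme \<Rightarrow> bool" where
  "left_ideal I R \<longleftrightarrow> additive_subgroup I R \<and>
     (\<forall>a \<in> carrier R. \<forall>x \<in> I. a \<otimes>\<^bsub>R\<^esub> x \<in> I)"

definition maximal_left_ideal :: "'b set \<Rightarrow> ('b, 'c) ring_scheme \<Rightarrow> bool" where
  "maximal_left_ideal I R \<longleftrightarrow> left_ideal I R \<and> I \<noteq> carrier R \<and>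
     (\<forall>J. left_ideal J R \<and> I \<subseteq> J \<and> J \<noteq> carrier R \<longrightarrow> J = I)"

definition jacobson_radical :: "('b, 'c) ring_scheme \<Rightarrow> 'b set" where
  "jacobson_radical R = carrier R \<inter> \<Inter> {I. maximal_left_ideal I R}"

end

theory Submission imports Defs begin

definition prs :: "'a::order set \<Rightarrow> ('a \<Rightarrow> 'a \<Rightarrow> 'k::field) \<Rightarrow> 'a \<Rightarrow> 'a \<Rightarrow> ('a \<times> 'a) set" where
  "prs P \<alpha> x y = {(u, v). u \<in> P \<and> v \<in> P \<and> x \<le> u \<and> u < v \<and> v \<le> y \<and> \<alpha> u v \<noteq> 0}"

lemma finite_prs:
  assumes "finitary P \<alpha>" "x \<in> P" "y \<in> P"
  shows "finite (prs P \<alpha> x y)"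
proof (cases "x < y")
  case True then show ?thesis using assms unfolding finitary_def prs_def by blast
next
  case False
  then have "prs P \<alpha> x y = {}" unfolding prs_def using order.strict_trans1 order.strict_trans2
    by fastforce
  then show ?thesis by simp
qed

lemma prs_mono: "x \<le> x' \<Longrightarrow> y' \<le> y \<Longrightarrow> prs P \<alpha> x' y' \<subseteq> prs P \<alpha> x y"
  unfolding prs_def by (auto intro: order_trans)

lemma incidenceD: "\<alpha> \<in> incidence P \<Longrightarrow> \<alpha> x y \<noteq> 0 \<Longrightarrow> x \<in> P \<and> y \<in> P \<and> x \<le> y"
  unfolding incidence_def by blast

lemma conv_right:
  assumes "finitary P \<beta>" "x \<in> P" "y \<in> P" "x \<le> y"
  shows "conv P \<alpha> \<beta> x y = (\<Sum>z \<in> {z \<in> P. x \<le> z \<and> z \<le> y} \<inter> ({x, y} \<union> fst ` prs P \<beta> x y). \<alpha> x z * \<beta> z y)"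
proof -
  let ?F = "{z \<in> P. x \<le> z \<and> z \<le> y} \<inter> ({x, y} \<union> fst ` prs P \<beta> x y)"
  have fin: "finite ?F" using finite_prs[OF assms(1-3)] by auto
  have sub: "{z \<in> P. x \<le> z \<and> z \<le> y \<and> \<alpha> x z * \<beta> z y \<noteq> 0} \<subseteq> ?F"
  proof
    fix z assume z: "z \<in> {z \<in> P. x \<le> z \<and> z \<le> y \<and> \<alpha> x z * \<beta> z y \<noteq> 0}"
    show "z \<in> ?F"
    proof (cases "z = y")
      case False
      with z have "(z, y) \<in> prs P \<beta> x y" unfolding prs_def using assms by auto
      then show ?thesis using z by force
    qed (use z in auto)
  qed
  have "conv P \<alpha> \<beta> x y = (\<Sum>z \<in> {z \<in> P. x \<le> z \<and> z \<le> y \<and> \<alpha> x z * \<beta> z y \<noteq> 0}. \<alpha> x z * \<beta> z y)"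
    using assms unfolding conv_def by simp
  also have "\<dots> = (\<Sum>z \<in> ?F. \<alpha> x z * \<beta> z y)"
    by (rule sum.mono_neutral_left[OF fin sub]) auto
  finally show ?thesis .
qed

lemma conv_left:
  assumes "finitary P \<alpha>" "x \<in> P" "y \<in> P" "x \<le> y"
  shows "conv P \<alpha> \<beta> x y = (\<Sum>z \<in> {z \<in> P. x \<le> z \<and> z \<le> y} \<inter> ({x, y} \<union> snd ` prs P \<alpha> x y). \<alpha> x z * \<beta> z y)"
proof -
  let ?F = "{z \<in> P. x \<le> z \<and> z \<le> y} \<inter> ({x, y} \<union> snd ` prs P \<alpha> x y)"
  have fin: "finite ?F" using finite_prs[OF assms(1-3)] by auto
  have sub: "{z \<in> P. x \<le> z \<and> z \<le> y \<and> \<alpha> x z * \<beta> z y \<noteq> 0} \<subseteq> ?F"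
  proof
    fix z assume z: "z \<in> {z \<in> P. x \<le> z \<and> z \<le> y \<and> \<alpha> x z * \<beta> z y \<noteq> 0}"
    show "z \<in> ?F"
    proof (cases "z = x")
      case False
      with z have "(x, z) \<in> prs P \<alpha> x y" unfolding prs_def using assms by auto
      then show ?thesis using z by force
    qed (use z in auto)
  qed
  have "conv P \<alpha> \<beta> x y = (\<Sum>z \<in> {z \<in> P. x \<le> z \<and> z \<le> y \<and> \<alpha> x z * \<beta> z y \<noteq> 0}. \<alpha> x z * \<beta> z y)"
    using assms unfolding conv_def by simp
  also have "\<dots> = (\<Sum>z \<in> ?F. \<alpha> x z * \<beta> z y)"
    by (rule sum.mono_neutral_left[OF fin sub]) auto
  finally show ?thesis .
qed

lemma conv_out: "\<not> (x \<in> P \<and> y \<in> P \<and> x \<le> y) \<Longrightarrow> conv P \<alpha> \<beta> x y = 0"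
  unfolding conv_def by auto

lemma conv_diag: "x \<in> P \<Longrightarrow> conv P \<alpha> \<beta> x x = \<alpha> x x * \<beta> x x"
proof -
  assume x: "x \<in> P"
  have "{z \<in> P. x \<le> z \<and> z \<le> x \<and> \<alpha> x z * \<beta> z x \<noteq> 0} = (if \<alpha> x x * \<beta> x x \<noteq> 0 then {x} else {})"
    using x by (auto intro: order.antisym)
  then show ?thesis using x unfolding conv_def by auto
qed

lemma conv_incidence: "conv P \<alpha> \<beta> \<in> incidence P"
  unfolding incidence_def conv_def by auto

lemma conv_finitary:
  assumes "finitary P \<alpha>" "finitary P \<beta>" "\<alpha> \<in> incidence P" "\<beta> \<in> incidence P"
  shows "finitary P (conv P \<alpha> \<beta>)"
  unfolding finitary_def
proof (intro ballI impI)
  fix x y assume xy: "x \<in> P" "y \<in> P" "x < y"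
  let ?S = "{(u, v). u \<in> P \<and> v \<in> P \<and> x \<le> u \<and> u < v \<and> v \<le> y \<and> conv P \<alpha> \<beta> u v \<noteq> 0}"
  have "?S \<subseteq> prs P \<alpha> x y \<union> prs P \<beta> x y \<union> (fst ` prs P \<alpha> x y \<times> snd ` prs P \<beta> x y)"
  proof
    fix p assume "p \<in> ?S"
    then obtain u v where p: "p = (u, v)" "u \<in> P" "v \<in> P" "x \<le> u" "u < v" "v \<le> y" "conv P \<alpha> \<beta> u v \<noteq> 0"
      by blast
    have uv: "u \<in> P \<and> v \<in> P \<and> u \<le> v" using p by auto
    have "(\<Sum>z \<in> {z \<in> P. u \<le> z \<and> z \<le> v \<and> \<alpha> u z * \<beta> z v \<noteq> 0}. \<alpha> u z * \<beta> z v) \<noteq> 0"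
      using p(7) unfolding conv_def by (simp only: uv simp_thms if_True)
    then obtain z where "z \<in> {z \<in> P. u \<le> z \<and> z \<le> v \<and> \<alpha> u z * \<beta> z v \<noteq> 0}"
      by (rule sum.not_neutral_contains_not_neutral)
    then have z: "z \<in> P" "u \<le> z" "z \<le> v" "\<alpha> u z \<noteq> 0" "\<beta> z v \<noteq> 0" by auto
    show "p \<in> prs P \<alpha> x y \<union> prs P \<beta> x y \<union> (fst ` prs P \<alpha> x y \<times> snd ` prs P \<beta> x y)"
    proof (cases "u = z")
      case True
      then have "(u, v) \<in> prs P \<beta> x y" using p z unfolding prs_def by auto
      then show ?thesis using p by auto
    next
      case uz: False
      show ?thesis
      proof (cases "z = v")
        case True
        then have "(u, v) \<in> prs P \<alpha> x y" using p z unfolding prs_def by auto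
        then show ?thesis using p by auto
      next
        case False
        have "(u, z) \<in> prs P \<alpha> x y" using p z uz unfolding prs_def by (auto intro: order_trans)
        moreover have "(z, v) \<in> prs P \<beta> x y" using p z False unfolding prs_def by (auto intro: order_trans)
        ultimately show ?thesis using p by force
      qed
    qed
  qed
  moreover have "finite (prs P \<alpha> x y \<union> prs P \<beta> x y \<union> (fst ` prs P \<alpha> x y \<times> snd ` prs P \<beta> x y))"
    using finite_prs assms xy by auto
  ultimately show "finite ?S" by (rule finite_subset)
qed

lemma conv_FI: "\<alpha> \<in> FI P \<Longrightarrow> \<beta> \<in> FI P \<Longrightarrow> conv P \<alpha> \<beta> \<in> FI P"
  unfolding FI_def mem_Collect_eq by (simp add: conv_finitary conv_incidence)

lemma add_FI:
  assumes "\<alpha> \<in> FI P" "\<beta> \<in> FI P" shows "(\<lambda>x y. \<alpha> x y + \<beta> x y) \<in> FI P"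
proof -
  have inc: "(\<lambda>x y. \<alpha> x y + \<beta> x y) \<in> incidence P"
    unfolding incidence_def
  proof (intro CollectI allI impI)
    fix x y assume "\<alpha> x y + \<beta> x y \<noteq> 0"
    then have "\<alpha> x y \<noteq> 0 \<or> \<beta> x y \<noteq> 0" by auto
    then show "x \<in> P \<and> y \<in> P \<and> x \<le> y" using assms unfolding FI_def incidence_def by blast
  qed
  have "finitary P (\<lambda>x y. \<alpha> x y + \<beta> x y)"
    unfolding finitary_def
  proof (intro ballI impI)
    fix x y assume xy: "x \<in> P" "y \<in> P" "x < y"
    have "{(u, v). u \<in> P \<and> v \<in> P \<and> x \<le> u \<and> u < v \<and> v \<le> y \<and> \<alpha> u v + \<beta> u v \<noteq> 0}
       \<subseteq> prs P \<alpha> x y \<union> prs P \<beta> x y" unfolding prs_def by auto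
    moreover have "finite (prs P \<alpha> x y \<union> prs P \<beta> x y)" using assms xy finite_prs unfolding FI_def by auto
    ultimately show "finite {(u, v). u \<in> P \<and> v \<in> P \<and> x \<le> u \<and> u < v \<and> v \<le> y \<and> \<alpha> u v + \<beta> u v \<noteq> 0}"
      by (rule finite_subset)
  qed
  then show ?thesis using inc unfolding FI_def by auto
qed

lemma neg_FI: "\<alpha> \<in> FI P \<Longrightarrow> (\<lambda>x y. - \<alpha> x y) \<in> FI P"
  unfolding FI_def incidence_def finitary_def by auto

lemma zero_FI: "(\<lambda>x y. 0) \<in> FI P"
  unfolding FI_def incidence_def finitary_def by auto

lemma delta_FI: "delta P \<in> FI (P :: 'a::order set)"
proof -
  have "finitary P (delta P)" unfolding finitary_def
  proof (intro ballI impI)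
    fix x y :: 'a assume "x < y"
    show "finite {(u, v). u \<in> P \<and> v \<in> P \<and> x \<le> u \<and> u < v \<and> v \<le> y \<and> delta P u v \<noteq> 0}"
      by (rule finite_subset[of _ "{}"]) (auto simp: delta_def)
  qed
  moreover have "delta P \<in> incidence P" unfolding incidence_def delta_def by auto
  ultimately show ?thesis unfolding FI_def by simp
qed

lemma conv_delta_right:
  assumes "\<alpha> \<in> FI P" shows "conv P \<alpha> (delta P) = \<alpha>"
proof (intro ext)
  fix x y
  show "conv P \<alpha> (delta P) x y = \<alpha> x y"
  proof (cases "x \<in> P \<and> y \<in> P \<and> x \<le> y")
    case True
    show ?thesis
    proof (cases "\<alpha> x y = 0")
      case True': True
      have E: "{z \<in> P. x \<le> z \<and> z \<le> y \<and> \<alpha> x z * delta P z y \<noteq> 0} = {}"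
        using True' by (auto simp: delta_def)
      show ?thesis using True' unfolding conv_def if_P[OF True] E by simp
    next
      case False': False
      have E: "{z \<in> P. x \<le> z \<and> z \<le> y \<and> \<alpha> x z * delta P z y \<noteq> 0} = {y}"
        using False' True by (auto simp: delta_def)
      show ?thesis using True unfolding conv_def if_P[OF True] E by (simp add: delta_def)
    qed
  next
    case False
    have "\<alpha> x y = 0" using assms False unfolding FI_def incidence_def by blast
    then show ?thesis by (simp add: conv_out[OF False])
  qed
qed


lemma conv_sumF:
  assumes "finite F" "F \<subseteq> {z \<in> P. x \<le> z \<and> z \<le> y}"
    "\<And>z. z \<in> P \<Longrightarrow> x \<le> z \<Longrightarrow> z \<le> y \<Longrightarrow> \<alpha> x z * \<beta> z y \<noteq> 0 \<Longrightarrow> z \<in> F"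
    "x \<in> P" "y \<in> P" "x \<le> y"
  shows "conv P \<alpha> \<beta> x y = (\<Sum>z \<in> F. \<alpha> x z * \<beta> z y)"
proof -
  have sub: "{z \<in> P. x \<le> z \<and> z \<le> y \<and> \<alpha> x z * \<beta> z y \<noteq> 0} \<subseteq> F" using assms(3) by blast
  have "conv P \<alpha> \<beta> x y = (\<Sum>z \<in> {z \<in> P. x \<le> z \<and> z \<le> y \<and> \<alpha> x z * \<beta> z y \<noteq> 0}. \<alpha> x z * \<beta> z y)"
    using assms unfolding conv_def by simp
  also have "\<dots> = (\<Sum>z \<in> F. \<alpha> x z * \<beta> z y)"
    by (rule sum.mono_neutral_left[OF assms(1) sub]) (use assms(2) in auto)
  finally show ?thesis .
qed

primrec pw :: "'a::order set \<Rightarrow> ('a \<Rightarrow> 'a \<Rightarrow> 'k::field) \<Rightarrow> nat \<Rightarrow> ('a \<Rightarrow> 'a \<Rightarrow> 'k)" where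
  "pw P \<nu> 0 = delta P"
| "pw P \<nu> (Suc k) = conv P (pw P \<nu> k) \<nu>"

lemma pw_incidence: "pw P \<nu> k \<in> incidence P"
proof (cases k)
  case 0 then show ?thesis by (auto simp: incidence_def delta_def)
next
  case (Suc j) then show ?thesis using conv_incidence by simp
qed

lemma conv_nonzero:
  assumes "conv P \<alpha> \<beta> x y \<noteq> 0"
  shows "x \<in> P \<and> y \<in> P \<and> x \<le> y \<and> (\<exists>z \<in> P. x \<le> z \<and> z \<le> y \<and> \<alpha> x z \<noteq> 0 \<and> \<beta> z y \<noteq> 0)"
proof -
  have xy: "x \<in> P \<and> y \<in> P \<and> x \<le> y" using assms conv_out by blast
  have "(\<Sum>z \<in> {z \<in> P. x \<le> z \<and> z \<le> y \<and> \<alpha> x z * \<beta> z y \<noteq> 0}. \<alpha> x z * \<beta> z y) \<noteq> 0"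
    using assms unfolding conv_def by (simp only: xy simp_thms if_True)
  then obtain z where "z \<in> {z \<in> P. x \<le> z \<and> z \<le> y \<and> \<alpha> x z * \<beta> z y \<noteq> 0}"
    by (rule sum.not_neutral_contains_not_neutral)
  then show ?thesis using xy by auto
qed

locale zd =
  fixes P :: "'a::order set" and \<nu> :: "'a \<Rightarrow> 'a \<Rightarrow> 'k::field"
  assumes nuFI: "\<nu> \<in> FI P" and diag: "\<And>x. \<nu> x x = 0"
begin

lemma fin_nu: "finitary P \<nu>" using nuFI unfolding FI_def by auto
lemma inc_nu: "\<nu> \<in> incidence P" using nuFI unfolding FI_def by auto

lemma pw_nil: "pw P \<nu> k x y \<noteq> 0 \<Longrightarrow> k \<le> card (prs P \<nu> x y)"
proof (induction k arbitrary: y)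
  case 0 then show ?case by simp
next
  case (Suc k)
  then have c: "conv P (pw P \<nu> k) \<nu> x y \<noteq> 0" by simp
  from conv_nonzero[OF c] obtain z where z: "x \<in> P" "y \<in> P" "x \<le> y" "z \<in> P" "x \<le> z" "z \<le> y"
    "pw P \<nu> k x z \<noteq> 0" "\<nu> z y \<noteq> 0" by blast
  have zy: "z < y" using z diag by (metis order_le_imp_less_or_eq)
  have IH: "k \<le> card (prs P \<nu> x z)" using Suc.IH z by blast
  have "prs P \<nu> x z \<subset> prs P \<nu> x y"
  proof
    show "prs P \<nu> x z \<subseteq> prs P \<nu> x y" using prs_mono z by blast
    have "(z, y) \<in> prs P \<nu> x y" using z zy unfolding prs_def by auto
    moreover have "(z, y) \<notin> prs P \<nu> x z" using zy unfolding prs_def by auto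
    ultimately show "prs P \<nu> x z \<noteq> prs P \<nu> x y" by blast
  qed
  then have "card (prs P \<nu> x z) < card (prs P \<nu> x y)"
    by (rule psubset_card_mono[OF finite_prs[OF fin_nu z(1,2)]])
  then show ?case using IH by simp
qed

lemma pw_start: "pw P \<nu> k u v \<noteq> 0 \<Longrightarrow> (k = 0 \<and> u = v) \<or> (\<exists>w. \<nu> u w \<noteq> 0 \<and> u < w \<and> w \<le> v)"
proof (induction k arbitrary: v)
  case 0 then show ?case by (auto simp: delta_def split: if_splits)
next
  case (Suc k)
  then have c: "conv P (pw P \<nu> k) \<nu> u v \<noteq> 0" by simp
  from conv_nonzero[OF c] obtain z where z: "u \<le> z" "z \<le> v"
    "pw P \<nu> k u z \<noteq> 0" "\<nu> z v \<noteq> 0" by blast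
  from Suc.IH[OF z(3)] show ?case
  proof
    assume "k = 0 \<and> u = z"
    then have "u < v" using z diag by (metis order_le_imp_less_or_eq)
    then show ?thesis using z \<open>k = 0 \<and> u = z\<close> by auto
  next
    assume "\<exists>w. \<nu> u w \<noteq> 0 \<and> u < w \<and> w \<le> z"
    then show ?thesis using z by (auto intro: order_trans)
  qed
qed

definition NN :: "'a \<Rightarrow> 'a \<Rightarrow> nat" where "NN x y = Suc (card (prs P \<nu> x y))"

definition tau :: "'a \<Rightarrow> 'a \<Rightarrow> 'k" where "tau x y = (\<Sum>k < NN x y. pw P \<nu> k x y)"

lemma tau_nonzero: "tau x y \<noteq> 0 \<Longrightarrow> \<exists>k. pw P \<nu> k x y \<noteq> 0"
  unfolding tau_def by (meson sum.not_neutral_contains_not_neutral)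

lemma tau_incidence: "tau \<in> incidence P"
  unfolding incidence_def
proof (intro CollectI allI impI)
  fix x y assume "tau x y \<noteq> 0"
  then obtain k where "pw P \<nu> k x y \<noteq> 0" using tau_nonzero by blast
  then show "x \<in> P \<and> y \<in> P \<and> x \<le> y" using pw_incidence[of P \<nu> k] unfolding incidence_def by blast
qed

lemma tau_finitary: "finitary P tau"
  unfolding finitary_def
proof (intro ballI impI)
  fix x y assume xy: "x \<in> P" "y \<in> P" "x < y"
  let ?S = "{(u, v). u \<in> P \<and> v \<in> P \<and> x \<le> u \<and> u < v \<and> v \<le> y \<and> tau u v \<noteq> 0}"
  have "?S \<subseteq> fst ` prs P \<nu> x y \<times> snd ` prs P \<nu> x y"
  proof
    fix p assume "p \<in> ?S"
    then obtain u v where p: "p = (u, v)" "u \<in> P" "v \<in> P" "x \<le> u" "u < v" "v \<le> y" "tau u v \<noteq> 0"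
      by blast
    obtain k where k: "pw P \<nu> k u v \<noteq> 0" using tau_nonzero p by blast
    have "k \<noteq> 0"
    proof
      assume "k = 0"
      then have "(delta P u v :: 'k) \<noteq> 0" using k by simp
      then show False using p(5) unfolding delta_def by (auto split: if_splits)
    qed
    then obtain j where j: "k = Suc j" by (cases k) auto
    from pw_start[OF k] \<open>k \<noteq> 0\<close> obtain w where w: "\<nu> u w \<noteq> 0" "u < w" "w \<le> v" by blast
    have "(u, w) \<in> prs P \<nu> x y" using w p inc_nu unfolding prs_def incidence_def by (auto intro: order_trans)
    then have u: "u \<in> fst ` prs P \<nu> x y" by force
    have c: "conv P (pw P \<nu> j) \<nu> u v \<noteq> 0" using k j by simp
    from conv_nonzero[OF c] obtain z where z: "z \<in> P" "u \<le> z" "z \<le> v" "\<nu> z v \<noteq> 0" by blast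
    have "z < v" using z diag by (metis order_le_imp_less_or_eq)
    then have "(z, v) \<in> prs P \<nu> x y" using z p unfolding prs_def by (auto intro: order_trans)
    then have "v \<in> snd ` prs P \<nu> x y" by force
    then show "p \<in> fst ` prs P \<nu> x y \<times> snd ` prs P \<nu> x y" using u p by blast
  qed
  moreover have "finite (fst ` prs P \<nu> x y \<times> snd ` prs P \<nu> x y)"
    using finite_prs[OF fin_nu xy(1,2)] by auto
  ultimately show "finite ?S" by (rule finite_subset)
qed

lemma tau_FI: "tau \<in> FI P" unfolding FI_def using tau_incidence tau_finitary by simp

lemma pw_zero_big: "x \<in> P \<Longrightarrow> NN x y \<le> k \<Longrightarrow> pw P \<nu> k x y = 0"
  using pw_nil unfolding NN_def by fastforce

lemma tau_ext:
  assumes "x \<in> P" "z \<in> P" "y \<in> P" "x \<le> z" "z \<le> y"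
  shows "tau x z = (\<Sum>k < NN x y. pw P \<nu> k x z)"
proof -
  have "card (prs P \<nu> x z) \<le> card (prs P \<nu> x y)"
    by (rule card_mono[OF finite_prs[OF fin_nu assms(1,3)] prs_mono]) (use assms in auto)
  then have le: "NN x z \<le> NN x y" unfolding NN_def by simp
  show ?thesis unfolding tau_def
    by (rule sum.mono_neutral_left) (use le pw_zero_big[OF assms(1)] in auto)
qed

lemma tau_inverse: "conv P tau (\<lambda>u v. delta P u v - \<nu> u v) = delta P"
proof (intro ext)
  fix x y
  show "conv P tau (\<lambda>u v. delta P u v - \<nu> u v) x y = delta P x y"
  proof (cases "x \<in> P \<and> y \<in> P \<and> x \<le> y")
    case False
    then have "delta P x y = 0" unfolding delta_def by auto
    then show ?thesis by (simp add: conv_out[OF False])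
  next
    case True
    then have xy: "x \<in> P" "y \<in> P" "x \<le> y" by auto
    define F where "F = {z \<in> P. x \<le> z \<and> z \<le> y} \<inter> ({x, y} \<union> fst ` prs P \<nu> x y)"
    have finF: "finite F" unfolding F_def using finite_prs[OF fin_nu xy(1,2)] by auto
    have FI: "F \<subseteq> {z \<in> P. x \<le> z \<and> z \<le> y}" unfolding F_def by auto
    have yF: "y \<in> F" unfolding F_def using xy by auto
    have supp: "z \<in> F" if "z \<in> P" "x \<le> z" "z \<le> y" "\<nu> z y \<noteq> 0 \<or> z = y" for z
    proof (cases "z = y")
      case True then show ?thesis using yF by simp
    next
      case False
      then have "(z, y) \<in> prs P \<nu> x y" using that xy unfolding prs_def by auto
      then show ?thesis unfolding F_def using that by force
    qed
    let ?N = "NN x y"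
    have c1: "conv P tau (\<lambda>u v. delta P u v - \<nu> u v) x y
        = (\<Sum>z \<in> F. tau x z * (delta P z y - \<nu> z y))"
      by (rule conv_sumF[OF finF FI _ xy]) (auto simp: delta_def intro: supp)
    also have "\<dots> = (\<Sum>z \<in> F. tau x z * delta P z y) - (\<Sum>z \<in> F. tau x z * \<nu> z y)"
      by (simp add: right_diff_distrib sum_subtractf)
    also have "(\<Sum>z \<in> F. tau x z * delta P z y) = tau x y"
    proof -
      have "(\<Sum>z \<in> F. tau x z * delta P z y) = (\<Sum>z \<in> F. if z = y then tau x y else 0)"
        by (rule sum.cong) (auto simp: delta_def xy)
      also have "\<dots> = tau x y" using finF yF by simp
      finally show ?thesis .
    qed
    also have "(\<Sum>z \<in> F. tau x z * \<nu> z y) = (\<Sum>z \<in> F. \<Sum>k < ?N. pw P \<nu> k x z * \<nu> z y)"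
      by (rule sum.cong) (use FI tau_ext xy in \<open>auto simp: sum_distrib_right\<close>)
    also have "\<dots> = (\<Sum>k < ?N. \<Sum>z \<in> F. pw P \<nu> k x z * \<nu> z y)" by (rule sum.swap)
    also have "\<dots> = (\<Sum>k < ?N. pw P \<nu> (Suc k) x y)"
    proof (rule sum.cong)
      fix k
      show "(\<Sum>z \<in> F. pw P \<nu> k x z * \<nu> z y) = pw P \<nu> (Suc k) x y"
        by (simp, rule conv_sumF[OF finF FI _ xy, symmetric]) (auto intro: supp)
    qed simp
    also have "tau x y = (\<Sum>k < ?N. pw P \<nu> k x y)" unfolding tau_def ..
    also have "(\<Sum>k < ?N. pw P \<nu> k x y) - (\<Sum>k < ?N. pw P \<nu> (Suc k) x y)
        = (\<Sum>k < ?N. pw P \<nu> k x y - pw P \<nu> (Suc k) x y)" by (simp add: sum_subtractf)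
    also have "\<dots> = pw P \<nu> 0 x y - pw P \<nu> ?N x y" by (rule sum_lessThan_telescope')
    also have "pw P \<nu> ?N x y = 0" using pw_zero_big xy by simp
    finally show ?thesis by simp
  qed
qed

end


lemma FI_ring_simps [simp]:
  "carrier (FI_ring P) = FI P" "mult (FI_ring P) = conv P" "one (FI_ring P) = delta P"
  "zero (FI_ring P) = (\<lambda>x y. 0)" "add (FI_ring P) = (\<lambda>\<alpha> \<beta> x y. \<alpha> x y + \<beta> x y)"
  by (simp_all add: FI_ring_def)

lemma minv_FI:
  assumes "\<alpha> \<in> FI P"
  shows "m_inv (add_monoid (FI_ring P)) \<alpha> = (\<lambda>x y. - \<alpha> x y)"
  unfolding m_inv_def
proof (rule the_equality)
  show "(\<lambda>x y. - \<alpha> x y) \<in> carrier (add_monoid (FI_ring P)) \<and>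
    \<alpha> \<otimes>\<^bsub>add_monoid (FI_ring P)\<^esub> (\<lambda>x y. - \<alpha> x y) = \<one>\<^bsub>add_monoid (FI_ring P)\<^esub> \<and>
    (\<lambda>x y. - \<alpha> x y) \<otimes>\<^bsub>add_monoid (FI_ring P)\<^esub> \<alpha> = \<one>\<^bsub>add_monoid (FI_ring P)\<^esub>"
    using neg_FI[OF assms] by simp
next
  fix b assume "b \<in> carrier (add_monoid (FI_ring P)) \<and>
    \<alpha> \<otimes>\<^bsub>add_monoid (FI_ring P)\<^esub> b = \<one>\<^bsub>add_monoid (FI_ring P)\<^esub> \<and>
    b \<otimes>\<^bsub>add_monoid (FI_ring P)\<^esub> \<alpha> = \<one>\<^bsub>add_monoid (FI_ring P)\<^esub>"
  then have "(\<lambda>x y. \<alpha> x y + b x y) = (\<lambda>x y. 0)" by simp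
  then have "\<And>x y. \<alpha> x y + b x y = 0" by meson
  then show "b = (\<lambda>x y. - \<alpha> x y)" by (intro ext) (simp add: eq_neg_iff_add_eq_0 add.commute)
qed

lemma conv_add_right:
  assumes "a \<in> FI P"
  shows "conv P a (\<lambda>x y. b x y + c x y) = (\<lambda>x y. conv P a b x y + conv P a c x y)"
proof (intro ext)
  fix x y
  show "conv P a (\<lambda>x y. b x y + c x y) x y = conv P a b x y + conv P a c x y"
  proof (cases "x \<in> P \<and> y \<in> P \<and> x \<le> y")
    case True
    have fa: "finitary P a" using assms unfolding FI_def by auto
    show ?thesis using True
      by (simp add: conv_left[OF fa] distrib_left sum.distrib)
  next
    case False then show ?thesis by (simp add: conv_out)
  qed
qed

lemma zd_in_max:
  fixes P :: "'a::order set" and \<gamma> :: "'a \<Rightarrow> 'a \<Rightarrow> 'k::field"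
  assumes M: "maximal_left_ideal M (FI_ring P :: ('a \<Rightarrow> 'a \<Rightarrow> 'k) ring)"
    and g: "\<gamma> \<in> FI P" "\<And>x. \<gamma> x x = 0"
  shows "\<gamma> \<in> M"
proof (rule ccontr)
  assume gM: "\<gamma> \<notin> M"
  let ?R = "FI_ring P :: ('a \<Rightarrow> 'a \<Rightarrow> 'k) ring"
  have LI: "left_ideal M ?R" and ne: "M \<noteq> FI P"
    and max: "\<And>J. left_ideal J ?R \<Longrightarrow> M \<subseteq> J \<Longrightarrow> J \<noteq> FI P \<Longrightarrow> J = M"
    using M unfolding maximal_left_ideal_def by auto
  have AS: "additive_subgroup M ?R" and mulM: "\<And>a x. a \<in> FI P \<Longrightarrow> x \<in> M \<Longrightarrow> conv P a x \<in> M"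
    using LI unfolding left_ideal_def by auto
  have Msub: "M \<subseteq> FI P" using additive_subgroup.a_subset[OF AS] by simp
  have Madd: "\<And>m1 m2. m1 \<in> M \<Longrightarrow> m2 \<in> M \<Longrightarrow> (\<lambda>x y. m1 x y + m2 x y) \<in> M"
  proof -
    fix m1 m2 assume "m1 \<in> M" "m2 \<in> M"
    from additive_subgroup.a_closed[OF AS this] show "(\<lambda>x y. m1 x y + m2 x y) \<in> M" by simp
  qed
  have M0: "(\<lambda>x y. 0) \<in> M" using additive_subgroup.zero_closed[OF AS] by simp
  have Mneg: "\<And>m. m \<in> M \<Longrightarrow> (\<lambda>x y. - m x y) \<in> M"
  proof -
    fix m assume m: "m \<in> M"
    have "a_inv ?R m \<in> M" using additive_subgroup.a_inv_closed[OF AS m] .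
    moreover have "m \<in> FI P" using m Msub by blast
    ultimately show "(\<lambda>x y. - m x y) \<in> M" using minv_FI[of m P] unfolding a_inv_def by simp
  qed
  define NS where "NS = {\<nu> \<in> FI P. \<forall>x. \<nu> x x = (0::'k)}"
  have NSadd: "\<And>a b. a \<in> NS \<Longrightarrow> b \<in> NS \<Longrightarrow> (\<lambda>x y. a x y + b x y) \<in> NS"
  proof -
    fix a b assume "a \<in> NS" "b \<in> NS"
    then show "(\<lambda>x y. a x y + b x y) \<in> NS" using add_FI[of a P b] unfolding NS_def by simp
  qed
  have NSneg: "\<And>a. a \<in> NS \<Longrightarrow> (\<lambda>x y. - a x y) \<in> NS"
  proof -
    fix a assume "a \<in> NS"
    then show "(\<lambda>x y. - a x y) \<in> NS" using neg_FI[of a P] unfolding NS_def by simp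
  qed
  have NS0: "(\<lambda>x y. 0) \<in> NS" unfolding NS_def using zero_FI by simp
  have NSmul: "\<And>a b. a \<in> FI P \<Longrightarrow> b \<in> NS \<Longrightarrow> conv P a b \<in> NS"
  proof -
    fix a b :: "'a \<Rightarrow> 'a \<Rightarrow> 'k" assume a: "a \<in> FI P" and b: "b \<in> NS"
    have "conv P a b x x = 0" for x
    proof (cases "x \<in> P")
      case True then show ?thesis using b conv_diag[OF True, of a b] unfolding NS_def by simp
    next
      case False then show ?thesis by (simp add: conv_out)
    qed
    then show "conv P a b \<in> NS" using conv_FI a b unfolding NS_def by auto
  qed
  define L where "L = {f. \<exists>m \<in> M. \<exists>\<nu> \<in> NS. f = (\<lambda>x y. m x y + \<nu> x y)}"
  have inL: "\<And>m \<nu>. m \<in> M \<Longrightarrow> \<nu> \<in> NS \<Longrightarrow> (\<lambda>x y. m x y + \<nu> x y) \<in> L"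
    unfolding L_def by blast
  have Lsub: "L \<subseteq> FI P"
  proof
    fix f assume "f \<in> L"
    then obtain m1 n1 where mn: "m1 \<in> M" "n1 \<in> NS" "f = (\<lambda>x y. m1 x y + n1 x y)" unfolding L_def by blast
    have "m1 \<in> FI P" "n1 \<in> FI P" using mn Msub unfolding NS_def by auto
    then show "f \<in> FI P" using add_FI mn(3) by simp
  qed
  have Ladd: "\<And>f g. f \<in> L \<Longrightarrow> g \<in> L \<Longrightarrow> (\<lambda>x y. f x y + g x y) \<in> L"
  proof -
    fix f g assume "f \<in> L" "g \<in> L"
    then obtain m1 n1 m2 n2 where mn: "m1 \<in> M" "n1 \<in> NS" "m2 \<in> M" "n2 \<in> NS"
      "f = (\<lambda>x y. m1 x y + n1 x y)" "g = (\<lambda>x y. m2 x y + n2 x y)" unfolding L_def by blast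
    have e: "(\<lambda>x y. f x y + g x y) = (\<lambda>x y. (\<lambda>x y. m1 x y + m2 x y) x y + (\<lambda>x y. n1 x y + n2 x y) x y)"
      using mn by (simp add: algebra_simps)
    show "(\<lambda>x y. f x y + g x y) \<in> L" by (subst e) (rule inL[OF Madd[OF mn(1,3)] NSadd[OF mn(2,4)]])
  qed
  have Lneg: "\<And>f. f \<in> L \<Longrightarrow> (\<lambda>x y. - f x y) \<in> L"
  proof -
    fix f assume "f \<in> L"
    then obtain m1 n1 where mn: "m1 \<in> M" "n1 \<in> NS" "f = (\<lambda>x y. m1 x y + n1 x y)" unfolding L_def by blast
    have e: "(\<lambda>x y. - f x y) = (\<lambda>x y. (\<lambda>x y. - m1 x y) x y + (\<lambda>x y. - n1 x y) x y)"
      using mn by (simp add: algebra_simps)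
    show "(\<lambda>x y. - f x y) \<in> L" by (subst e) (rule inL[OF Mneg[OF mn(1)] NSneg[OF mn(2)]])
  qed
  have L0: "(\<lambda>x y. 0) \<in> L" using inL[OF M0 NS0] by simp
  have Lmul: "\<And>a f. a \<in> FI P \<Longrightarrow> f \<in> L \<Longrightarrow> conv P a f \<in> L"
  proof -
    fix a f :: "'a \<Rightarrow> 'a \<Rightarrow> 'k" assume a: "a \<in> FI P" and "f \<in> L"
    then obtain m1 n1 where mn: "m1 \<in> M" "n1 \<in> NS" "f = (\<lambda>x y. m1 x y + n1 x y)" unfolding L_def by blast
    then have e: "conv P a f = (\<lambda>x y. conv P a m1 x y + conv P a n1 x y)"
      using conv_add_right[OF a] by simp
    show "conv P a f \<in> L" by (subst e) (rule inL[OF mulM[OF a mn(1)] NSmul[OF a mn(2)]])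
  qed
  have LL: "left_ideal L ?R"
    unfolding left_ideal_def
  proof (intro conjI ballI)
    show "additive_subgroup L ?R"
    proof (rule additive_subgroupI, rule subgroup.intro)
      show "L \<subseteq> carrier (add_monoid ?R)" using Lsub by simp
      show "\<And>x y. x \<in> L \<Longrightarrow> y \<in> L \<Longrightarrow> x \<otimes>\<^bsub>add_monoid ?R\<^esub> y \<in> L" using Ladd by simp
      show "\<one>\<^bsub>add_monoid ?R\<^esub> \<in> L" using L0 by simp
      show "\<And>x. x \<in> L \<Longrightarrow> inv\<^bsub>add_monoid ?R\<^esub> x \<in> L"
      proof -
        fix x assume x: "x \<in> L"
        then have "x \<in> FI P" using Lsub by blast
        then show "inv\<^bsub>add_monoid ?R\<^esub> x \<in> L" using minv_FI[of x P] Lneg[OF x] by simp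
      qed
    qed
    show "\<And>a x. a \<in> carrier ?R \<Longrightarrow> x \<in> L \<Longrightarrow> a \<otimes>\<^bsub>?R\<^esub> x \<in> L" using Lmul by simp
  qed
  have MsubL: "M \<subseteq> L"
  proof
    fix m assume "m \<in> M"
    then show "m \<in> L" using inL[OF _ NS0, of m] by simp
  qed
  have "\<gamma> \<in> NS" unfolding NS_def using g by simp
  then have gL: "\<gamma> \<in> L" using inL[OF M0] by simp
  have "L = FI P" using max[OF LL MsubL] gL gM by blast
  then have "delta P \<in> L" using delta_FI by blast
  then obtain m \<nu> where m: "m \<in> M" "\<nu> \<in> NS" "delta P = (\<lambda>x y. m x y + \<nu> x y)" unfolding L_def by blast
  then have meq: "m = (\<lambda>x y. delta P x y - \<nu> x y)" by (simp add: fun_eq_iff)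
  interpret zd P \<nu> using m(2) unfolding NS_def by unfold_locales auto
  have "delta P \<in> M" using mulM[OF tau_FI m(1)] tau_inverse meq by simp
  then have "FI P \<subseteq> M"
  proof -
    assume d: "delta P \<in> M"
    show "FI P \<subseteq> M"
    proof
      fix a :: "'a \<Rightarrow> 'a \<Rightarrow> 'k" assume a: "a \<in> FI P"
      show "a \<in> M" using mulM[OF a d] conv_delta_right[OF a] by simp
    qed
  qed
  then show False using ne Msub by blast
qed


lemma J_sub: "jacobson_radical (FI_ring P) \<subseteq> FI P"
  unfolding jacobson_radical_def by simp

lemma J_add:
  fixes P :: "'a::order set"
  assumes "j1 \<in> jacobson_radical (FI_ring P :: ('a \<Rightarrow> 'a \<Rightarrow> 'k::field) ring)"
    "j2 \<in> jacobson_radical (FI_ring P :: ('a \<Rightarrow> 'a \<Rightarrow> 'k) ring)"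
  shows "(\<lambda>x y. j1 x y + j2 x y) \<in> jacobson_radical (FI_ring P :: ('a \<Rightarrow> 'a \<Rightarrow> 'k) ring)"
proof -
  have "(\<lambda>x y. j1 x y + j2 x y) \<in> M" if M: "maximal_left_ideal M (FI_ring P :: ('a \<Rightarrow> 'a \<Rightarrow> 'k) ring)" for M
  proof -
    have AS: "additive_subgroup M (FI_ring P :: ('a \<Rightarrow> 'a \<Rightarrow> 'k) ring)"
      using M unfolding maximal_left_ideal_def left_ideal_def by blast
    have "j1 \<in> M" "j2 \<in> M" using assms M unfolding jacobson_radical_def by auto
    from additive_subgroup.a_closed[OF AS this] show ?thesis by simp
  qed
  moreover have "(\<lambda>x y. j1 x y + j2 x y) \<in> FI P" using assms J_sub add_FI by blast
  ultimately show ?thesis unfolding jacobson_radical_def by simp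
qed

lemma comm_in_J:
  fixes P :: "'a::order set"
  assumes p: "p \<in> FI P" and q: "q \<in> FI P"
  shows "(\<lambda>x y. conv P p q x y - conv P q p x y) \<in> jacobson_radical (FI_ring P :: ('a \<Rightarrow> 'a \<Rightarrow> 'k::field) ring)"
proof -
  let ?g = "(\<lambda>x y. conv P p q x y - conv P q p x y) :: 'a \<Rightarrow> 'a \<Rightarrow> 'k"
  have "?g = (\<lambda>x y. conv P p q x y + (\<lambda>x y. - conv P q p x y) x y)" by simp
  moreover have "(\<lambda>x y. conv P p q x y + (\<lambda>x y. - conv P q p x y) x y) \<in> FI P"
    by (rule add_FI[OF conv_FI[OF p q] neg_FI[OF conv_FI[OF q p]]])
  ultimately have gFI: "?g \<in> FI P" by simp
  have gd: "?g x x = 0" for x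
  proof (cases "x \<in> P")
    case True then show ?thesis by (simp add: conv_diag mult.commute)
  next
    case False then show ?thesis by (simp add: conv_out)
  qed
  have "?g \<in> M" if "maximal_left_ideal M (FI_ring P :: ('a \<Rightarrow> 'a \<Rightarrow> 'k) ring)" for M
    by (rule zd_in_max[OF that gFI gd])
  then show ?thesis using gFI unfolding jacobson_radical_def by simp
qed

lemma coset_sub:
  fixes P :: "'a::order set"
  assumes "(\<lambda>x y. p x y - q x y) \<in> jacobson_radical (FI_ring P :: ('a \<Rightarrow> 'a \<Rightarrow> 'k::field) ring)"
  shows "jacobson_radical (FI_ring P) +>\<^bsub>(FI_ring P :: ('a \<Rightarrow> 'a \<Rightarrow> 'k) ring)\<^esub> p
    \<subseteq> jacobson_radical (FI_ring P) +>\<^bsub>(FI_ring P :: ('a \<Rightarrow> 'a \<Rightarrow> 'k) ring)\<^esub> q"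
proof
  let ?J = "jacobson_radical (FI_ring P :: ('a \<Rightarrow> 'a \<Rightarrow> 'k) ring)"
  fix f assume "f \<in> ?J +>\<^bsub>(FI_ring P :: ('a \<Rightarrow> 'a \<Rightarrow> 'k) ring)\<^esub> p"
  then obtain h where h: "h \<in> ?J" "f = (\<lambda>x y. h x y + p x y)" unfolding a_r_coset_def' by auto
  have h': "(\<lambda>x y. h x y + (\<lambda>x y. p x y - q x y) x y) \<in> ?J" by (rule J_add[OF h(1) assms])
  have fe: "f = (\<lambda>x y. (\<lambda>x y. h x y + (\<lambda>x y. p x y - q x y) x y) x y + q x y)" using h(2) by simp
  show "f \<in> ?J +>\<^bsub>(FI_ring P :: ('a \<Rightarrow> 'a \<Rightarrow> 'k) ring)\<^esub> q"
    unfolding a_r_coset_def' FI_ring_simps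
    by (rule UN_I[OF h']) (simp only: fe singleton_iff)
qed

theorem corollary3:
  fixes P :: "'a::order set"
  defines "R \<equiv> (FI_ring P :: ('a \<Rightarrow> 'a \<Rightarrow> 'k::field) ring)"
  shows "\<forall>X \<in> carrier (R Quot jacobson_radical R). \<forall>Y \<in> carrier (R Quot jacobson_radical R).
           X \<otimes>\<^bsub>R Quot jacobson_radical R\<^esub> Y = Y \<otimes>\<^bsub>R Quot jacobson_radical R\<^esub> X"
proof (intro ballI)
  let ?J = "jacobson_radical R"
  have elem: "\<And>X x. X \<in> carrier (R Quot ?J) \<Longrightarrow> x \<in> X \<Longrightarrow> x \<in> FI P"
  proof -
    fix X x assume X: "X \<in> carrier (R Quot ?J)" and x: "x \<in> X"
    from X obtain a where a: "a \<in> FI P" "X = ?J +>\<^bsub>R\<^esub> a"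
      unfolding FactRing_def A_RCOSETS_def' R_def by auto
    then obtain h where h: "h \<in> ?J" "x = (\<lambda>u v. h u v + a u v)"
      using x unfolding a_r_coset_def' R_def by auto
    have "h \<in> FI P" using h(1) J_sub unfolding R_def by blast
    then show "x \<in> FI P" using h(2) add_FI a(1) by simp
  qed
  have eq: "?J +>\<^bsub>R\<^esub> (conv P a b) = ?J +>\<^bsub>R\<^esub> (conv P b a)" if "a \<in> FI P" "b \<in> FI P" for a b
    using coset_sub[OF comm_in_J[OF that]] coset_sub[OF comm_in_J[OF that(2,1)]] unfolding R_def
    by (rule subset_antisym)
  fix X Y assume X: "X \<in> carrier (R Quot ?J)" and Y: "Y \<in> carrier (R Quot ?J)"
  have "X \<otimes>\<^bsub>R Quot ?J\<^esub> Y = (\<Union>a\<in>X. \<Union>b\<in>Y. ?J +>\<^bsub>R\<^esub> (conv P a b))"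
    unfolding FactRing_def rcoset_mult_def R_def by simp
  also have "\<dots> = (\<Union>a\<in>X. \<Union>b\<in>Y. ?J +>\<^bsub>R\<^esub> (conv P b a))"
    using eq elem X Y by (intro SUP_cong refl) blast
  also have "\<dots> = (\<Union>b\<in>Y. \<Union>a\<in>X. ?J +>\<^bsub>R\<^esub> (conv P b a))" by blast
  also have "\<dots> = Y \<otimes>\<^bsub>R Quot ?J\<^esub> X"
    unfolding FactRing_def rcoset_mult_def R_def by simp
  finally show "X \<otimes>\<^bsub>R Quot ?J\<^esub> Y = Y \<otimes>\<^bsub>R Quot ?J\<^esub> X" .
qed

end
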